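(* Let $G$ be a finite group. If $\mathcal{C}$ is a cycle of $\mathcal{P}(G)$ with maximum length, then $\ell(\mathcal{C})\geq w_G+1$. Moreover, if equality holds, then for every path $\mathcal{W}=c_1,\dots,c_k$ in $\mathcal{P}^*(G)/\mathtt{N}$ of maximum $\mathtt{N}$-weight, and for every $i\in\{2,\dots,k-1\}$ with $|c_i|\geq2$, there is no vertex $y$ of $\mathcal{P}^*(G)/\mathtt{N}$ with $y\notin\{c_1,\dots,c_k\}$, $y$ equal or adjacent to $c_i$, and $|y|\geq2$.
   Context: The power graph $\mathcal{P}(G)$ has vertex set $G$, and distinct $x,y$ are adjacent iff one is a positive integer power of the other; $\mathcal{P}^*(G)$ is its subgraph induced on $G\setminus\{1\}$. $N[x]$ is the closed neighbourhood of $x$ in $\mathcal{P}(G)$, and $x\mathtt{N}y$ iff $N[x]=N[y]$. $\mathcal{P}^*(G)/\mathtt{N}$ is the quotient graph whose vertices are the $\mathtt{N}$-classes of elements of $G\setminus\{1\}$, two distinct classes being adjacent iff some element of one is adjacent in $\mathcal{P}^*(G)$ to some element of the other. A path is a sequence of distinct vertices with consecutive ones adjacent; a cycle is a cyclic such sequence of $k\ge3$ distinct vertices, with length $\ell$ its number of edges. The $\mathtt{N}$-weight of a path $\mathcal{W}$ in $\mathcal{P}^*(G)/\mathtt{N}$ is $w_{\mathtt{N}}(\mathcal{W})=\sum_{c\in V_{\mathcal{W}}}|c|$, and $w_G$ is the maximum $\mathtt{N}$-weight of a path in $\mathcal{P}^*(G)/\mathtt{N}$. *)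

theory Defs
  imports "HOL-Algebra.Group"
begin

definition pg_adj :: "('a, 'b) monoid_scheme \<Rightarrow> 'a \<Rightarrow> 'a \<Rightarrow> bool" where
  "pg_adj G x y \<longleftrightarrow> x \<in> carrier G \<and> y \<in> carrier G \<and> x \<noteq> y \<and>
     ((\<exists>n::nat. n \<ge> 1 \<and> y = x [^]\<^bsub>G\<^esub> n) \<or> (\<exists>n::nat. n \<ge> 1 \<and> x = y [^]\<^bsub>G\<^esub> n))"

definition closed_nbhd :: "('a, 'b) monoid_scheme \<Rightarrow> 'a \<Rightarrow> 'a set" where
  "closed_nbhd G x = insert x {y \<in> carrier G. pg_adj G x y}"

definition N_rel :: "('a, 'b) monoid_scheme \<Rightarrow> 'a \<Rightarrow> 'a \<Rightarrow> bool" where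
  "N_rel G x y \<longleftrightarrow> closed_nbhd G x = closed_nbhd G y"

definition N_class :: "('a, 'b) monoid_scheme \<Rightarrow> 'a \<Rightarrow> 'a set" where
  "N_class G x = {y \<in> carrier G - {\<one>\<^bsub>G\<^esub>}. N_rel G x y}"

definition quot_vertices :: "('a, 'b) monoid_scheme \<Rightarrow> 'a set set" where
  "quot_vertices G = N_class G ` (carrier G - {\<one>\<^bsub>G\<^esub>})"

definition quot_adj :: "('a, 'b) monoid_scheme \<Rightarrow> 'a set \<Rightarrow> 'a set \<Rightarrow> bool" where
  "quot_adj G c d \<longleftrightarrow> c \<in> quot_vertices G \<and> d \<in> quot_vertices G \<and> c \<noteq> d \<and>
     (\<exists>x\<in>c. \<exists>y\<in>d. pg_adj G x y)"

definition quot_path :: "('a, 'b) monoid_scheme \<Rightarrow> 'a set list \<Rightarrow> bool" where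
  "quot_path G W \<longleftrightarrow> set W \<subseteq> quot_vertices G \<and> distinct W \<and>
     (\<forall>i. Suc i < length W \<longrightarrow> quot_adj G (W ! i) (W ! Suc i))"

definition N_weight :: "'a set list \<Rightarrow> nat" where
  "N_weight W = (\<Sum>c\<in>set W. card c)"

definition w_G :: "('a, 'b) monoid_scheme \<Rightarrow> nat" where
  "w_G G = Max (N_weight ` {W. quot_path G W})"

(* a cycle of P(G): k \<ge> 3 distinct vertices, cyclically consecutive ones adjacent;
   its length (number of edges) is the length of the list *)
definition pg_cycle :: "('a, 'b) monoid_scheme \<Rightarrow> 'a list \<Rightarrow> bool" where
  "pg_cycle G C \<longleftrightarrow> length C \<ge> 3 \<and> set C \<subseteq> carrier G \<and> distinct C \<and>
     (\<forall>i < length C. pg_adj G (C ! i) (C ! ((i + 1) mod length C)))"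

end

theory Submission
  imports Defs "HOL-Algebra.Multiplicative_Group"
begin

lemma pg_adj_sym: "pg_adj G x y \<Longrightarrow> pg_adj G y x"
  unfolding pg_adj_def by blast

lemma one_adj:
  assumes "group G" "finite (carrier G)" "x \<in> carrier G" "x \<noteq> \<one>\<^bsub>G\<^esub>"
  shows "pg_adj G \<one>\<^bsub>G\<^esub> x"
proof -
  have "group.ord G x \<ge> 1" "x [^]\<^bsub>G\<^esub> group.ord G x = \<one>\<^bsub>G\<^esub>"
    using group.ord_ge_1[OF assms(1,2,3)] group.pow_ord_eq_1[OF assms(1,3)] by auto
  then show ?thesis using assms unfolding pg_adj_def by (metis group.is_monoid monoid.one_closed)
qed

lemma class_props:
  assumes "c \<in> quot_vertices G"
  shows "c \<subseteq> carrier G - {\<one>\<^bsub>G\<^esub>}" "c \<noteq> {}"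
  using assms unfolding quot_vertices_def N_class_def N_rel_def by auto

lemma class_clique:
  assumes "c \<in> quot_vertices G" "x \<in> c" "y \<in> c" "x \<noteq> y"
  shows "pg_adj G x y"
proof -
  obtain z where "c = N_class G z" using assms(1) unfolding quot_vertices_def by auto
  then have "closed_nbhd G x = closed_nbhd G y"
    using assms unfolding N_class_def N_rel_def by auto
  moreover have "y \<in> closed_nbhd G y" unfolding closed_nbhd_def by auto
  ultimately show ?thesis using assms(4) unfolding closed_nbhd_def by auto
qed

lemma class_disj:
  assumes "c \<in> quot_vertices G" "d \<in> quot_vertices G" "c \<noteq> d"
  shows "c \<inter> d = {}"
proof (rule ccontr)
  assume "c \<inter> d \<noteq> {}"
  then obtain x where x: "x \<in> c" "x \<in> d" by auto
  obtain z where z: "c = N_class G z" using assms(1) unfolding quot_vertices_def by auto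
  obtain w where w: "d = N_class G w" using assms(2) unfolding quot_vertices_def by auto
  have "closed_nbhd G z = closed_nbhd G w"
    using x z w unfolding N_class_def N_rel_def by auto
  then have "c = d" using z w unfolding N_class_def N_rel_def by auto
  then show False using assms(3) by simp
qed

lemma class_same:
  assumes "c \<in> quot_vertices G" "x \<in> c" "x' \<in> c"
  shows "closed_nbhd G x = closed_nbhd G x'"
proof -
  obtain z where "c = N_class G z" using assms(1) unfolding quot_vertices_def by auto
  then show ?thesis using assms unfolding N_class_def N_rel_def by auto
qed

lemma quot_adj_all:
  assumes "quot_adj G c d" "x \<in> c" "y \<in> d"
  shows "pg_adj G x y"
proof -
  obtain x0 y0 where h: "x0 \<in> c" "y0 \<in> d" "pg_adj G x0 y0"
    and c: "c \<in> quot_vertices G" and d: "d \<in> quot_vertices G" and cd: "c \<noteq> d"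
    using assms(1) unfolding quot_adj_def by auto
  have disj: "c \<inter> d = {}" using class_disj[OF c d cd] .
  have "y0 \<in> closed_nbhd G x0" using h unfolding closed_nbhd_def pg_adj_def by auto
  then have "y0 \<in> closed_nbhd G x" using class_same[OF c h(1) assms(2)] by simp
  moreover have "y0 \<noteq> x" using disj h assms by auto
  ultimately have "pg_adj G x y0" unfolding closed_nbhd_def by auto
  then have "x \<in> closed_nbhd G y0" using pg_adj_sym unfolding closed_nbhd_def pg_adj_def by blast
  then have "x \<in> closed_nbhd G y" using class_same[OF d h(2) assms(3)] by simp
  moreover have "y \<noteq> x" using disj h assms by auto
  ultimately show ?thesis using pg_adj_sym unfolding closed_nbhd_def by auto
qed

lemma clique_list:
  assumes "distinct xs" "\<forall>x\<in>set xs. \<forall>y\<in>set xs. x \<noteq> y \<longrightarrow> R x y"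
  shows "successively R xs"
  using assms
proof (induction xs)
  case (Cons a xs)
  then show ?case
    by (cases xs) (auto simp: successively_Cons)
qed simp

lemma quot_path_Cons:
  assumes "quot_path G (B # W)"
  shows "quot_path G W" "B \<in> quot_vertices G" "B \<notin> set W" "W \<noteq> [] \<Longrightarrow> quot_adj G B (hd W)"
proof -
  show "quot_path G W" unfolding quot_path_def
  proof (intro conjI allI impI)
    fix i assume "Suc i < length W"
    then have "Suc (Suc i) < length (B # W)" by simp
    then have "quot_adj G ((B # W) ! Suc i) ((B # W) ! Suc (Suc i))"
      using assms unfolding quot_path_def by blast
    then show "quot_adj G (W ! i) (W ! Suc i)" by simp
  qed (use assms in \<open>auto simp: quot_path_def\<close>)
  show "B \<in> quot_vertices G" "B \<notin> set W" using assms unfolding quot_path_def by auto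
  show "W \<noteq> [] \<Longrightarrow> quot_adj G B (hd W)" using assms unfolding quot_path_def
    by (metis hd_conv_nth length_Cons length_greater_0_conv nth_Cons_0 nth_Cons_Suc Suc_less_eq)
qed

lemma quot_path_take: "quot_path G W \<Longrightarrow> quot_path G (take n W)"
  unfolding quot_path_def by (auto dest: in_set_takeD)

lemma quot_path_drop: "quot_path G W \<Longrightarrow> quot_path G (drop n W)"
  unfolding quot_path_def by (auto dest: in_set_dropD)

lemma N_weight_sum: "distinct W \<Longrightarrow> N_weight W = sum_list (map card W)"
  unfolding N_weight_def by (simp add: sum_list_distinct_conv_sum_set)

lemma blocks:
  assumes "quot_path G W" "finite (carrier G)"
  shows "\<exists>xs. set xs = \<Union>(set W) \<and> distinct xs \<and> length xs = sum_list (map card W) \<and>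
     successively (pg_adj G) xs \<and> (W \<noteq> [] \<longrightarrow> hd xs \<in> hd W \<and> last xs \<in> last W)"
  using assms(1)
proof (induction W)
  case Nil
  then show ?case by auto
next
  case (Cons B W)
  note qp = quot_path_Cons[OF Cons.prems]
  obtain xs where xs: "set xs = \<Union>(set W)" "distinct xs" "length xs = sum_list (map card W)"
     "successively (pg_adj G) xs" "W \<noteq> [] \<longrightarrow> hd xs \<in> hd W \<and> last xs \<in> last W"
    using Cons.IH[OF qp(1)] by blast
  have fB: "finite B" using class_props(1)[OF qp(2)] assms(2) finite_subset by blast
  obtain bs where bs: "set bs = B" "distinct bs" using finite_distinct_list[OF fB] by blast
  have bne: "bs \<noteq> []" using bs class_props(2)[OF qp(2)] by auto
  have sb: "successively (pg_adj G) bs"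
    by (rule clique_list[OF bs(2)]) (use class_clique[OF qp(2)] bs(1) in blast)
  have setW: "set W \<subseteq> quot_vertices G" using qp(1) unfolding quot_path_def by auto
  have disj: "B \<inter> \<Union>(set W) = {}"
    using class_disj[OF qp(2)] setW qp(3) by blast
  have lenb: "length bs = card B" using bs distinct_card by fastforce
  have link: "xs \<noteq> [] \<Longrightarrow> pg_adj G (last bs) (hd xs)"
  proof -
    assume "xs \<noteq> []"
    then have "W \<noteq> []" using xs(1) by auto
    then show ?thesis using quot_adj_all[OF qp(4)] xs(5) bs(1) bne last_in_set by blast
  qed
  have xne: "W \<noteq> [] \<Longrightarrow> xs \<noteq> []"
  proof -
    assume "W \<noteq> []"
    then have "hd W \<in> set W" by (rule hd_in_set)
    then have "hd W \<noteq> {}" using class_props(2) setW by blast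
    then show "xs \<noteq> []" using xs(1) \<open>hd W \<in> set W\<close> by auto
  qed
  show ?case
    apply (rule exI[of _ "bs @ xs"])
    using xne
    using xs bs bne sb disj lenb link
    by (auto simp: successively_append_iff)
qed

lemma cycle_intro:
  assumes "length D \<ge> 3" "set D \<subseteq> carrier G" "distinct D" "successively (pg_adj G) D"
    "pg_adj G (last D) (hd D)"
  shows "pg_cycle G D"
  unfolding pg_cycle_def
proof (intro conjI allI impI)
  fix i assume i: "i < length D"
  show "pg_adj G (D ! i) (D ! ((i + 1) mod length D))"
  proof (cases "Suc i < length D")
    case True
    have "successively (pg_adj G) (take 2 (drop i D))"
      using assms(4)
      by (metis append_take_drop_id successively_append_iff)
    moreover have "take 2 (drop i D) = [D!i, D!Suc i]" using True
      by (metis Cons_nth_drop_Suc Suc_lessD numeral_2_eq_2 take0 take_Suc_Cons)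
    ultimately show ?thesis using True by simp
  next
    case False
    then have "i = length D - 1" using i by auto
    moreover have "D \<noteq> []" using i by auto
    ultimately show ?thesis using assms(5) i False
      by (simp add: last_conv_nth hd_conv_nth)
  qed
qed (use assms in auto)

lemma path_cycle_bound:
  assumes G: "group G" "finite (carrier G)" and C3: "length C \<ge> 3"
    and mx: "\<forall>D. pg_cycle G D \<longrightarrow> length D \<le> length C"
    and W: "quot_path G W"
  shows "N_weight W + 1 \<le> length C"
proof (cases "N_weight W \<le> 2")
  case True then show ?thesis using C3 by simp
next
  case False
  obtain xs where xs: "set xs = \<Union>(set W)" "distinct xs" "length xs = sum_list (map card W)"
     "successively (pg_adj G) xs"
    using blocks[OF W G(2)] by blast
  have dW: "distinct W" using W unfolding quot_path_def by auto
  have len: "length xs = N_weight W" using xs(3) N_weight_sum[OF dW] by simp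
  then have xne: "xs \<noteq> []" using False by auto
  have sub: "set xs \<subseteq> carrier G - {\<one>\<^bsub>G\<^esub>}"
    using xs(1) W class_props(1) unfolding quot_path_def by blast
  have one: "\<one>\<^bsub>G\<^esub> \<in> carrier G" using G(1) by (simp add: group.is_monoid monoid.one_closed)
  have "pg_cycle G (\<one>\<^bsub>G\<^esub> # xs)"
  proof (rule cycle_intro)
    show "3 \<le> length (\<one>\<^bsub>G\<^esub> # xs)" using len False by simp
    show "set (\<one>\<^bsub>G\<^esub> # xs) \<subseteq> carrier G" using sub one by auto
    show "distinct (\<one>\<^bsub>G\<^esub> # xs)" using sub xs(2) by auto
    have "hd xs \<in> set xs" "last xs \<in> set xs" using xne by auto
    then have "pg_adj G \<one>\<^bsub>G\<^esub> (hd xs)" "pg_adj G \<one>\<^bsub>G\<^esub> (last xs)"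
      using one_adj[OF G] sub by auto
    then show "successively (pg_adj G) (\<one>\<^bsub>G\<^esub> # xs)" "pg_adj G (last (\<one>\<^bsub>G\<^esub> # xs)) (hd (\<one>\<^bsub>G\<^esub> # xs))"
      using xs(4) xne by (auto simp: successively_Cons pg_adj_sym)
  qed
  then show ?thesis using mx len by force
qed

lemma finite_paths:
  assumes "finite (carrier G)"
  shows "finite {W. quot_path G W}"
proof -
  have fq: "finite (quot_vertices G)" using assms unfolding quot_vertices_def by simp
  have "{W. quot_path G W} \<subseteq> {W. set W \<subseteq> quot_vertices G \<and> length W \<le> card (quot_vertices G)}"
    unfolding quot_path_def using fq by (auto simp: card_mono distinct_card[symmetric])
  then show ?thesis using finite_lists_length_le[OF fq] finite_subset by blast
qed

lemma no_extension:
  assumes G: "group G" "finite (carrier G)"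
    and mx: "\<forall>D. pg_cycle G D \<longrightarrow> length D \<le> length C"
    and W: "quot_path G W" and eq: "length C = N_weight W + 1"
    and j: "1 \<le> j" "Suc j < length W" and cj: "card (W ! j) \<ge> 2"
    and y: "y \<in> quot_vertices G" "y \<notin> set W" "quot_adj G y (W ! j)"
  shows False
proof -
  define Wa where "Wa = take j W"
  define Wb where "Wb = drop (Suc j) W"
  define c where "c = W ! j"
  have dW: "distinct W" and sW: "set W \<subseteq> quot_vertices G" using W unfolding quot_path_def by auto
  have Wsplit: "W = Wa @ c # Wb" unfolding Wa_def Wb_def c_def using j by (simp add: id_take_nth_drop)
  have cq: "c \<in> quot_vertices G" using sW j unfolding c_def by auto
  obtain xa where xa: "set xa = \<Union>(set Wa)" "distinct xa" "length xa = sum_list (map card Wa)"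
     "successively (pg_adj G) xa" "Wa \<noteq> [] \<longrightarrow> hd xa \<in> hd Wa \<and> last xa \<in> last Wa"
    using blocks[OF quot_path_take[OF W] G(2)] unfolding Wa_def by blast
  obtain xb where xb: "set xb = \<Union>(set Wb)" "distinct xb" "length xb = sum_list (map card Wb)"
     "successively (pg_adj G) xb" "Wb \<noteq> [] \<longrightarrow> hd xb \<in> hd Wb \<and> last xb \<in> last Wb"
    using blocks[OF quot_path_drop[OF W] G(2)] unfolding Wb_def by blast
  have Wane: "Wa \<noteq> []" using j unfolding Wa_def by auto
  have Wbne: "Wb \<noteq> []" using j unfolding Wb_def by auto
  have tk: "take j W = take (j-1) W @ [W!(j-1)]" using j take_Suc_conv_app_nth[of "j-1" W] by simp
  have lastWa: "last Wa = W ! (j - 1)" unfolding Wa_def using tk by simp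
  have hdWb: "hd Wb = W ! Suc j" unfolding Wb_def using j by (simp add: hd_drop_conv_nth)
  have adj1: "quot_adj G (W ! (j - 1)) c" using W j unfolding quot_path_def c_def
    by (metis Suc_diff_1 Suc_lessD less_le_trans less_one not_less)
  have adj2: "quot_adj G c (W ! Suc j)" using W j unfolding quot_path_def c_def by blast
  have fc: "finite c" "finite y" using class_props(1)[OF cq] class_props(1)[OF y(1)] G(2) finite_subset by blast+
  have cne: "c \<noteq> {}" using cj c_def by auto
  then obtain a where a: "a \<in> c" by auto
  obtain zs where zs: "set zs = c - {a}" "distinct zs" using finite_distinct_list fc(1) by (meson finite_Diff)
  obtain ys where ys: "set ys = y" "distinct ys" using finite_distinct_list fc(2) by blast
  have lzs: "length zs = card c - 1" using zs a fc by (metis card_Diff_singleton distinct_card)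
  have lys: "length ys = card y" using ys by (metis distinct_card)
  have zne: "zs \<noteq> []" using lzs cj c_def by auto
  have yne: "ys \<noteq> []" using ys class_props(2)[OF y(1)] by auto
  have sWa: "set Wa \<subseteq> quot_vertices G" "set Wb \<subseteq> quot_vertices G" using sW Wsplit by auto
  have xane: "xa \<noteq> []"
  proof
    assume e: "xa = []"
    have h: "hd Wa \<in> set Wa" using Wane by (rule hd_in_set)
    then have "hd Wa \<noteq> {}" using class_props(2) sWa(1) by blast
    then obtain x where "x \<in> hd Wa" by blast
    then have "x \<in> set xa" using h xa(1) by blast
    then show False using e by simp
  qed
  have xbne: "xb \<noteq> []"
  proof
    assume e: "xb = []"
    have h: "hd Wb \<in> set Wb" using Wbne by (rule hd_in_set)
    then have "hd Wb \<noteq> {}" using class_props(2) sWa(2) by blast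
    then obtain x where "x \<in> hd Wb" by blast
    then have "x \<in> set xb" using h xb(1) by blast
    then show False using e by simp
  qed
  have dis: "distinct (Wa @ c # Wb)" using dW Wsplit by simp
  have cWa: "c \<notin> set Wa" "c \<notin> set Wb" "set Wa \<inter> set Wb = {}" using dis by auto
  have yWab: "y \<notin> set Wa" "y \<notin> set Wb" "y \<noteq> c" using y(2) Wsplit by auto
  have D1: "\<Union>(set Wa) \<inter> \<Union>(set Wb) = {}"
    using cWa(3) sWa class_disj by blast
  have D2: "\<Union>(set Wa) \<inter> c = {}" "\<Union>(set Wb) \<inter> c = {}"
    using cWa sWa class_disj cq by blast+
  have D3: "\<Union>(set Wa) \<inter> y = {}" "\<Union>(set Wb) \<inter> y = {}" "y \<inter> c = {}"
    using yWab sWa class_disj cq y(1) by blast+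
  define D where "D = \<one>\<^bsub>G\<^esub> # xa @ a # ys @ zs @ xb"
  have one: "\<one>\<^bsub>G\<^esub> \<in> carrier G" using G(1) by (simp add: group.is_monoid monoid.one_closed)
  have Bs: "\<And>B. B \<in> set Wa \<union> set Wb \<union> {c, y} \<Longrightarrow> B \<subseteq> carrier G - {\<one>\<^bsub>G\<^esub>}"
    using class_props(1) sWa cq y(1) by blast
  have sub1: "set xa \<subseteq> carrier G - {\<one>\<^bsub>G\<^esub>}" using xa(1) Bs by auto
  have sub2: "set xb \<subseteq> carrier G - {\<one>\<^bsub>G\<^esub>}" using xb(1) Bs by auto
  have sub3: "y \<subseteq> carrier G - {\<one>\<^bsub>G\<^esub>}" "c \<subseteq> carrier G - {\<one>\<^bsub>G\<^esub>}" using Bs by auto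
  have sub: "set (xa @ a # ys @ zs @ xb) \<subseteq> carrier G - {\<one>\<^bsub>G\<^esub>}"
    using sub1 sub2 sub3 ys(1) zs(1) a by auto
  have sa1: "successively (pg_adj G) ys"
    by (rule clique_list[OF ys(2)]) (use class_clique[OF y(1)] ys(1) in blast)
  have sa2: "successively (pg_adj G) zs"
    by (rule clique_list[OF zs(2)]) (use class_clique[OF cq] zs(1) in blast)
  note sa = sa1 sa2
  have e1: "pg_adj G (last xa) a" using quot_adj_all[OF adj1] xa(5) Wane lastWa a by auto
  have e2: "pg_adj G a (hd ys)" using quot_adj_all[OF y(3)] a yne ys(1) hd_in_set pg_adj_sym c_def by metis
  have e3: "pg_adj G (last ys) (hd zs)" using quot_adj_all[OF y(3)] zne yne ys(1) zs(1) hd_in_set last_in_set c_def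
    by (metis Diff_iff)
  have e4: "pg_adj G (last zs) (hd xb)" using quot_adj_all[OF adj2] zne xb(5) Wbne hdWb zs(1) last_in_set
    by (metis Diff_iff)
  have hl: "hd (xa @ a # ys @ zs @ xb) \<in> set (xa @ a # ys @ zs @ xb)"
     "last (xa @ a # ys @ zs @ xb) \<in> set (xa @ a # ys @ zs @ xb)"
    by (rule hd_in_set, simp, rule last_in_set, simp)
  have "pg_cycle G D"
  proof (rule cycle_intro)
    show "3 \<le> length D" unfolding D_def using yne zne by (simp add: Suc_le_eq)
    show "set D \<subseteq> carrier G" unfolding D_def using sub one by auto
    show "distinct D"
    proof -
      have "distinct (zs @ xb)" using zs xb(1,2) D2 by auto
      moreover have "set ys \<inter> set (zs @ xb) = {}" using ys zs xb(1) D3 by auto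
      ultimately have "distinct (ys @ zs @ xb)" using ys(2) by simp
      moreover have "a \<notin> set (ys @ zs @ xb)" using a zs ys xb(1) D2 D3 by auto
      ultimately have "distinct (a # ys @ zs @ xb)" by simp
      moreover have "set xa \<inter> set (a # ys @ zs @ xb) = {}" using a xa(1) zs ys xb(1) D1 D2 D3 by auto
      ultimately have "distinct (xa @ a # ys @ zs @ xb)" using xa(2) by simp
      then show ?thesis using sub unfolding D_def by auto
    qed
    have o: "pg_adj G \<one>\<^bsub>G\<^esub> (hd (xa @ a # ys @ zs @ xb))" "pg_adj G \<one>\<^bsub>G\<^esub> (last (xa @ a # ys @ zs @ xb))"
      using one_adj[OF G] sub hl by blast+
    have "successively (pg_adj G) (xa @ a # ys @ zs @ xb)"
    proof -
      have "successively (pg_adj G) (zs @ xb)" using sa(2) xb(4) e4 zne xbne by (simp add: successively_append_iff)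
      then have "successively (pg_adj G) (ys @ zs @ xb)" using sa(1) e3 yne zne
        by (simp add: successively_append_iff)
      then have "successively (pg_adj G) (a # ys @ zs @ xb)" using e2 yne by (simp add: successively_Cons)
      then show ?thesis using xa(4) e1 xane by (simp add: successively_append_iff)
    qed
    then show "successively (pg_adj G) D" unfolding D_def using o by (simp add: successively_Cons)
    show "pg_adj G (last D) (hd D)" unfolding D_def using o(2) by (simp add: pg_adj_sym)
  qed
  then have "length D \<le> length C" using mx by blast
  moreover have "N_weight W = sum_list (map card Wa) + card c + sum_list (map card Wb)"
    using N_weight_sum[OF dW] Wsplit by (metis add.assoc list.map(2) map_append sum_list.Cons sum_list_append)
  moreover have "length D = 1 + length xa + 1 + length ys + length zs + length xb" unfolding D_def by simp
  moreover have "card y \<ge> 1" using class_props(2)[OF y(1)] fc(2) by (simp add: Suc_le_eq card_gt_0_iff)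
  moreover have "card c \<ge> 2" using cj c_def by simp
  ultimately show False using eq xa(3) xb(3) lys lzs by linarith
qed

theorem mainTheorem5:
  fixes G :: "('a, 'b) monoid_scheme" and C :: "'a list"
  assumes "group G" and "finite (carrier G)"
    and "pg_cycle G C"
    and "\<forall>D. pg_cycle G D \<longrightarrow> length D \<le> length C"
  shows "length C \<ge> w_G G + 1 \<and>
    (length C = w_G G + 1 \<longrightarrow>
      (\<forall>W. quot_path G W \<and> N_weight W = w_G G \<longrightarrow>
        (\<forall>i \<in> {2..length W - 1}. card (W ! (i - 1)) \<ge> 2 \<longrightarrow>
           \<not> (\<exists>y \<in> quot_vertices G. y \<notin> set W \<and>
                 (y = W ! (i - 1) \<or> quot_adj G y (W ! (i - 1))) \<and> card y \<ge> 2))))"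
proof (intro conjI impI allI ballI notI)
  have C3: "length C \<ge> 3" using assms(3) unfolding pg_cycle_def by auto
  have ne: "[] \<in> {W. quot_path G W}" unfolding quot_path_def by simp
  have "Max (N_weight ` {W. quot_path G W}) \<le> length C - 1"
  proof (rule Max.boundedI)
    show "finite (N_weight ` {W. quot_path G W})" using finite_paths[OF assms(2)] by simp
    show "N_weight ` {W. quot_path G W} \<noteq> {}" using ne by blast
    fix a assume "a \<in> N_weight ` {W. quot_path G W}"
    then show "a \<le> length C - 1" using path_cycle_bound[OF assms(1,2) C3 assms(4)] by force
  qed
  then show "w_G G + 1 \<le> length C" unfolding w_G_def using C3 by simp
next
  fix W i
  assume eq: "length C = w_G G + 1" and W: "quot_path G W \<and> N_weight W = w_G G"
    and i: "i \<in> {2..length W - 1}" and cj: "2 \<le> card (W ! (i - 1))"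
    and ex: "\<exists>y\<in>quot_vertices G. y \<notin> set W \<and> (y = W ! (i - 1) \<or> quot_adj G y (W ! (i - 1))) \<and> 2 \<le> card y"
  then obtain y where y: "y \<in> quot_vertices G" "y \<notin> set W" "y = W ! (i - 1) \<or> quot_adj G y (W ! (i - 1))"
    by blast
  have ij: "1 \<le> i - 1" "Suc (i - 1) < length W" using i by auto
  have "y \<noteq> W ! (i - 1)" using y(2) ij by auto
  then have "quot_adj G y (W ! (i - 1))" using y(3) by blast
  then show False using no_extension[OF assms(1,2,4), of W "i - 1" y] W eq ij cj y by auto
qed

end
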